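(* Let $f:\mathbb{R}^n\to\mathbb{R}$, $g:\mathbb{R}^m\to\mathbb{R}$, $Q:\mathbb{R}^n\times\mathbb{R}^m\to\mathbb{R}\cup\{+\infty\}$ and $L(x,y)=f(x)+Q(x,y)+g(y)$ satisfy the following: (i) $L$ is bounded below; (ii) $f,g$ are continuously differentiable and $\nabla f$, $\nabla g$ are Lipschitz continuous with constants $L_{\nabla f}$, $L_{\nabla g}$ respectively; (iii) $Q$ is proper and lower semicontinuous; (iv) $\phi_1:\mathbb{R}^n\to\mathbb{R}$ and $\phi_2:\mathbb{R}^m\to\mathbb{R}$ are differentiable, $\phi_i$ is $\theta_i$-strongly convex with $\theta_1>L_{\nabla f}$, $\theta_2>L_{\nabla g}$, and $\nabla\phi_i$ is $\eta_i$-Lipschitz continuous ($i=1,2$). Let $\{(x_k,y_k)\}$ and $\{(\hat x_k,\hat y_k)\}$ be sequences generated by the following algorithm: choose $(x_0,y_0)\in\mathbb{R}^n\times\mathbb{R}^m$, set $(\hat x_0,\hat y_0)=(x_0,y_0)$, choose $\alpha_{\max},\beta_{\max}\ge 0$ with $\alpha_{\max}+\beta_{\max}<1$ and parameters $\alpha_k\in[0,\alpha_{\max}]$, $\beta_k\in[0,\beta_{\max}]$; for $k=0,1,2,\dots$: 1. $x_{k+1}\in\arg\min_{x\in\mathbb{R}^n}\{Q(x,\hat y_k)+\langle\nabla f(\hat x_k),x\rangle+D_{\phi_1}(x,\hat x_k)\}$, and $y_{k+1}\in\arg\min_{y\in\mathbb{R}^m}\{Q(x_{k+1},y)+\langle\nabla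 g(\hat y_k),y\rangle+D_{\phi_2}(y,\hat y_k)\}$; 2. $u_{k+1}=x_{k+1}+\alpha_k(x_{k+1}-x_k)+\beta_k(x_k-x_{k-1})$, $v_{k+1}=y_{k+1}+\alpha_k(y_{k+1}-y_k)+\beta_k(y_k-y_{k-1})$; 3. if $L(u_{k+1},v_{k+1})\le L(x_{k+1},y_{k+1})$ then $(\hat x_{k+1},\hat y_{k+1})=(u_{k+1},v_{k+1})$, else $(\hat x_{k+1},\hat y_{k+1})=(x_{k+1},y_{k+1})$. Then: (i) The sequences $\{L(x_k,y_k)\}$ and $\{L(\hat x_k,\hat y_k)\}$ are monotonically nonincreasing and have the same limit, i.e. $\lim_{k\to\infty}L(x_k,y_k)=\lim_{k\to\infty}L(\hat x_k,\hat y_k)=L^\ast$. In particular, for all $k$, $L(x_{k+1},y_{k+1})\le L(x_k,y_k)-\rho\|(x_{k+1}-\hat x_k,y_{k+1}-\hat y_k)\|^2$ and $L(\hat x_{k+1},\hat y_{k+1})\le L(\hat x_k,\hat y_k)-\rho\|(x_{k+1}-\hat x_k,y_{k+1}-\hat y_k)\|^2$, where $\rho=\min\{\frac{\theta_1-L_{\nabla f}}{2},\frac{\theta_2-L_{\nabla g}}{2}\}$. (ii) $\sum_{k=0}^\infty\|(x_{k+1}-\hat x_k,y_{k+1}-\hat y_k)\|^2<\infty$, and hence $\lim_{k\to\infty}\|x_{k+1}-\hat x_k\|=0$ and $\lim_{k\to\infty}\|y_{k+1}-\hat y_k\|=0$.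
   Context: For a convex differentiable function $\phi$, the Bregman distance is $D_\phi(x,y)=\phi(x)-\phi(y)-\langle\nabla\phi(y),x-y\rangle$. A function $\phi$ is $\theta$-strongly convex ($\theta>0$) if $\phi-\frac{\theta}{2}\|\cdot\|^2$ is convex. Norms are Euclidean. In step 2 at $k=0$, $(x_{-1},y_{-1})$ denotes a given initial point (the paper does not specify it; e.g. $(x_{-1},y_{-1})=(x_0,y_0)$). "Generated by the algorithm" presupposes that the minimizers in step 1 exist and some choice is made. *)

theory Defs
  imports "HOL-Analysis.Analysis"
begin

definition bregman :: "('a::real_inner \<Rightarrow> real) \<Rightarrow> ('a \<Rightarrow> 'a) \<Rightarrow> 'a \<Rightarrow> 'a \<Rightarrow> real" where
  "bregman phi gphi x y = phi x - phi y - inner (gphi y) (x - y)"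

definition strongly_convex :: "real \<Rightarrow> ('a::real_normed_vector \<Rightarrow> real) \<Rightarrow> bool" where
  "strongly_convex theta phi \<longleftrightarrow> theta > 0 \<and> convex_on UNIV (\<lambda>x. phi x - theta / 2 * (norm x)\<^sup>2)"

definition lsc :: "('a::topological_space \<Rightarrow> ereal) \<Rightarrow> bool" where
  "lsc F \<longleftrightarrow> (\<forall>p. F p \<le> Liminf (at p) F)"

definition proper_fun :: "('a \<Rightarrow> ereal) \<Rightarrow> bool" where
  "proper_fun F \<longleftrightarrow> (\<forall>p. F p \<noteq> -\<infinity>) \<and> (\<exists>p. F p \<noteq> \<infinity>)"

end

theory Submission
  imports Defs
begin


lemma line_deriv:
  fixes F :: "'a::real_inner \<Rightarrow> real"
  assumes "\<And>z. (F has_derivative (\<lambda>h. inner (G z) h)) (at z)"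
  shows "((\<lambda>t. F (a + t *\<^sub>R d)) has_real_derivative inner (G (a + t *\<^sub>R d)) d) (at t)"
proof -
  have l: "((\<lambda>t. a + t *\<^sub>R d) has_derivative (\<lambda>h. h *\<^sub>R d)) (at t)"
    by (auto intro!: derivative_eq_intros)
  have "((\<lambda>t. F (a + t *\<^sub>R d)) has_derivative (\<lambda>h. inner (G (a + t *\<^sub>R d)) (h *\<^sub>R d))) (at t)"
    using has_derivative_compose[OF l assms] by (simp add: o_def)
  moreover have "(\<lambda>h. inner (G (a + t *\<^sub>R d)) (h *\<^sub>R d)) = (*) (inner (G (a + t *\<^sub>R d)) d)"
    by (auto simp: mult.commute)
  ultimately show ?thesis by (simp add: has_field_derivative_def)
qed

lemma descent:
  fixes f :: "'a::real_inner \<Rightarrow> real"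
  assumes fd: "\<And>z. (f has_derivative (\<lambda>h. inner (gf z) h)) (at z)"
    and lip: "Lf-lipschitz_on UNIV gf"
  shows "f b \<le> f a + inner (gf a) (b - a) + Lf / 2 * (norm (b - a))\<^sup>2"
proof -
  define d where "d = b - a"
  define h where "h t = f (a + t *\<^sub>R d) - t * inner (gf a) d - Lf / 2 * t\<^sup>2 * (norm d)\<^sup>2" for t
  have "h 1 \<le> h 0"
  proof (rule DERIV_nonpos_imp_nonincreasing[of 0 1 h])
    fix t :: real assume t: "0 \<le> t" "t \<le> 1"
    have D: "(h has_real_derivative inner (gf (a + t *\<^sub>R d)) d - inner (gf a) d - Lf * t * (norm d)\<^sup>2) (at t)"
      unfolding h_def
      by (rule derivative_eq_intros line_deriv[OF fd] refl | simp)+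
    have "inner (gf (a + t *\<^sub>R d)) d - inner (gf a) d = inner (gf (a + t *\<^sub>R d) - gf a) d"
      by (simp add: inner_diff_left)
    also have "\<dots> \<le> norm (gf (a + t *\<^sub>R d) - gf a) * norm d"
      by (rule norm_cauchy_schwarz)
    also have "\<dots> \<le> (Lf * norm (t *\<^sub>R d)) * norm d"
      using lipschitz_on_normD[OF lip, of "a + t *\<^sub>R d" a] by (simp add: mult_right_mono)
    also have "\<dots> = Lf * t * (norm d)\<^sup>2" using t by (simp add: power2_eq_square)
    finally show "\<exists>y. DERIV h t :> y \<and> y \<le> 0" using D by (intro exI[of _ _]) auto
  qed simp
  thus ?thesis by (simp add: h_def d_def)
qed


lemma nsq_deriv: "((\<lambda>z::'a::real_inner. (norm z)\<^sup>2) has_derivative (\<lambda>h. inner (2 *\<^sub>R z) h)) (at z)"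
proof -
  have "((\<lambda>z::'a. inner z z) has_derivative (\<lambda>h. inner z h + inner h z)) (at z)"
    by (auto intro!: derivative_eq_intros)
  moreover have "(\<lambda>h. inner z h + inner h z) = (\<lambda>h. inner (2 *\<^sub>R z) h)"
    by (auto simp: inner_commute)
  ultimately show ?thesis by (simp add: power2_norm_eq_inner)
qed

lemma sc_bregman:
  fixes phi :: "'a::real_inner \<Rightarrow> real"
  assumes sc: "strongly_convex theta phi"
    and pd: "\<And>z. (phi has_derivative (\<lambda>h. inner (gphi z) h)) (at z)"
  shows "theta / 2 * (norm (x - y))\<^sup>2 \<le> bregman phi gphi x y"
proof -
  define d where "d = x - y"
  define psi where "psi z = phi z - theta / 2 * (norm z)\<^sup>2" for z
  define p where "p t = psi (y + t *\<^sub>R d)" for t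
  have cpsi: "convex_on UNIV psi" using sc unfolding strongly_convex_def psi_def[abs_def] by simp
  have cp: "convex_on UNIV p"
  proof (rule convex_onI)
    fix s a b :: real assume s: "0 < s" "s < 1"
    have "y + ((1 - s) *\<^sub>R a + s *\<^sub>R b) *\<^sub>R d = (1 - s) *\<^sub>R (y + a *\<^sub>R d) + s *\<^sub>R (y + b *\<^sub>R d)"
      by (simp add: algebra_simps)
    thus "p ((1 - s) *\<^sub>R a + s *\<^sub>R b) \<le> (1 - s) * p a + s * p b"
      unfolding p_def using convex_onD[OF cpsi, of s "y + a *\<^sub>R d" "y + b *\<^sub>R d"] s by simp
  qed simp
  have D: "(p has_real_derivative (inner (gphi y) d - theta * inner y d)) (at 0)"
  proof -
    have "((\<lambda>t. phi (y + t *\<^sub>R d) - theta / 2 * (norm (y + t *\<^sub>R d))\<^sup>2) has_real_derivative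
       (inner (gphi (y + 0 *\<^sub>R d)) d - theta / 2 * inner (2 *\<^sub>R (y + 0 *\<^sub>R d)) d)) (at 0)"
      by (intro DERIV_diff DERIV_cmult line_deriv[OF pd] line_deriv[OF nsq_deriv])
    thus ?thesis unfolding p_def[abs_def] psi_def by simp
  qed
  have "p 1 - p 0 \<ge> (inner (gphi y) d - theta * inner y d) * (1 - 0)"
    by (rule convex_on_imp_above_tangent[OF cp]) (use D in \<open>auto intro: has_field_derivative_at_within\<close>)
  moreover have "(norm x)\<^sup>2 = (norm y)\<^sup>2 + 2 * inner y d + (norm d)\<^sup>2"
    unfolding d_def power2_norm_eq_inner by (simp add: algebra_simps inner_commute)
  ultimately show ?thesis
    by (simp add: p_def psi_def bregman_def d_def algebra_simps)
qed


lemma ereal_comb: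
  fixes q0 q1 q2 :: ereal
  assumes n1: "q1 \<noteq> -\<infinity>" and n2: "q2 \<noteq> -\<infinity>" and n0: "q0 \<noteq> -\<infinity>"
    and h1: "q1 + ereal c1 \<le> q0 + ereal c0"
    and h2: "q2 + ereal d1 \<le> q1 + ereal d0"
    and A: "F1 + r1 \<le> F0 + c1 - c0" and B: "G1 + r2 \<le> G0 + d1 - d0"
    and R: "R \<le> r1 + r2"
  shows "ereal F1 + q2 + ereal G1 \<le> ereal F0 + q0 + ereal G0 - ereal R"
proof (cases "q0 = \<infinity>")
  case True thus ?thesis by simp
next
  case False
  then obtain a where a: "q0 = ereal a" using n0 by (cases q0) auto
  have "q1 \<noteq> \<infinity>" using h1 a by auto
  then obtain b where b: "q1 = ereal b" using n1 by (cases q1) auto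
  have "q2 \<noteq> \<infinity>" using h2 b by auto
  then obtain c where c: "q2 = ereal c" using n2 by (cases q2) auto
  have "b + c1 \<le> a + c0" "c + d1 \<le> b + d0" using h1 h2 a b c by auto
  hence "F1 + c + G1 \<le> F0 + a + G0 - R" using A B R by linarith
  thus ?thesis using a c by simp
qed

lemma ereal_minus_nonneg_le: "(0::real) \<le> e \<Longrightarrow> (a::ereal) - ereal e \<le> a"
  by (cases a) auto

theorem lemma3p1:
  fixes f :: "'a::euclidean_space \<Rightarrow> real" and gf :: "'a \<Rightarrow> 'a"
    and g :: "'b::euclidean_space \<Rightarrow> real" and gg :: "'b \<Rightarrow> 'b"
    and Q :: "'a \<Rightarrow> 'b \<Rightarrow> ereal"
    and L :: "'a \<Rightarrow> 'b \<Rightarrow> ereal"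
    and phi1 :: "'a \<Rightarrow> real" and gphi1 :: "'a \<Rightarrow> 'a"
    and phi2 :: "'b \<Rightarrow> real" and gphi2 :: "'b \<Rightarrow> 'b"
    and Lf Lg theta1 theta2 eta1 eta2 amax bmax :: real
    and alpha beta :: "nat \<Rightarrow> real"
    and x xh u :: "nat \<Rightarrow> 'a" and y yh v :: "nat \<Rightarrow> 'b"
    and xm1 :: 'a and ym1 :: 'b
  assumes L_def: "\<And>a b. L a b = ereal (f a) + Q a b + ereal (g b)"
    and L_bdd: "\<exists>c::real. \<forall>a b. ereal c \<le> L a b"
    and f_deriv: "\<And>a. (f has_derivative (\<lambda>h. inner (gf a) h)) (at a)"
    and g_deriv: "\<And>b. (g has_derivative (\<lambda>h. inner (gg b) h)) (at b)"
    and gf_cont: "continuous_on UNIV gf" and gg_cont: "continuous_on UNIV gg"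
    and gf_lip: "Lf-lipschitz_on UNIV gf" and gg_lip: "Lg-lipschitz_on UNIV gg"
    and Q_proper: "proper_fun (\<lambda>(a, b). Q a b)"
    and Q_lsc: "lsc (\<lambda>(a, b). Q a b)"
    and phi1_deriv: "\<And>a. (phi1 has_derivative (\<lambda>h. inner (gphi1 a) h)) (at a)"
    and phi2_deriv: "\<And>b. (phi2 has_derivative (\<lambda>h. inner (gphi2 b) h)) (at b)"
    and phi1_sc: "strongly_convex theta1 phi1" and phi2_sc: "strongly_convex theta2 phi2"
    and theta1_gt: "theta1 > Lf" and theta2_gt: "theta2 > Lg"
    and gphi1_lip: "eta1-lipschitz_on UNIV gphi1" and gphi2_lip: "eta2-lipschitz_on UNIV gphi2"
    and init_dom: "L (x 0) (y 0) < \<infinity>"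
    and init_hat: "xh 0 = x 0" "yh 0 = y 0"
    and amax: "amax \<ge> 0" and bmax: "bmax \<ge> 0" and ab_max: "amax + bmax < 1"
    and alpha_rng: "\<And>k. 0 \<le> alpha k \<and> alpha k \<le> amax"
    and beta_rng: "\<And>k. 0 \<le> beta k \<and> beta k \<le> bmax"
    and x_step: "\<And>k z. Q (x (Suc k)) (yh k) + ereal (inner (gf (xh k)) (x (Suc k)) + bregman phi1 gphi1 (x (Suc k)) (xh k))
                     \<le> Q z (yh k) + ereal (inner (gf (xh k)) z + bregman phi1 gphi1 z (xh k))"
    and y_step: "\<And>k w. Q (x (Suc k)) (y (Suc k)) + ereal (inner (gg (yh k)) (y (Suc k)) + bregman phi2 gphi2 (y (Suc k)) (yh k))
                     \<le> Q (x (Suc k)) w + ereal (inner (gg (yh k)) w + bregman phi2 gphi2 w (yh k))"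
    and u_def: "\<And>k. u (Suc k) = x (Suc k) + alpha k *\<^sub>R (x (Suc k) - x k)
                     + beta k *\<^sub>R (x k - (if k = 0 then xm1 else x (k - 1)))"
    and v_def: "\<And>k. v (Suc k) = y (Suc k) + alpha k *\<^sub>R (y (Suc k) - y k)
                     + beta k *\<^sub>R (y k - (if k = 0 then ym1 else y (k - 1)))"
    and hat_step: "\<And>k. (xh (Suc k), yh (Suc k)) =
                     (if L (u (Suc k)) (v (Suc k)) \<le> L (x (Suc k)) (y (Suc k))
                      then (u (Suc k), v (Suc k)) else (x (Suc k), y (Suc k)))"
  shows "antimono (\<lambda>k. L (x k) (y k)) \<and> antimono (\<lambda>k. L (xh k) (yh k))
         \<and> (\<exists>Lstar::real. (\<lambda>k. L (x k) (y k)) \<longlonglongrightarrow> ereal Lstar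
                         \<and> (\<lambda>k. L (xh k) (yh k)) \<longlonglongrightarrow> ereal Lstar)
         \<and> (\<forall>k. L (x (Suc k)) (y (Suc k)) \<le> L (x k) (y k)
                  - ereal (min ((theta1 - Lf) / 2) ((theta2 - Lg) / 2)
                           * (norm (x (Suc k) - xh k, y (Suc k) - yh k))\<^sup>2))
         \<and> (\<forall>k. L (xh (Suc k)) (yh (Suc k)) \<le> L (xh k) (yh k)
                  - ereal (min ((theta1 - Lf) / 2) ((theta2 - Lg) / 2)
                           * (norm (x (Suc k) - xh k, y (Suc k) - yh k))\<^sup>2))
         \<and> summable (\<lambda>k. (norm (x (Suc k) - xh k, y (Suc k) - yh k))\<^sup>2)
         \<and> (\<lambda>k. norm (x (Suc k) - xh k)) \<longlonglongrightarrow> 0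
         \<and> (\<lambda>k. norm (y (Suc k) - yh k)) \<longlonglongrightarrow> 0"
proof -
  define rho where "rho = min ((theta1 - Lf) / 2) ((theta2 - Lg) / 2)"
  define N where "N k = (norm (x (Suc k) - xh k, y (Suc k) - yh k))\<^sup>2" for k
  have rho_pos: "rho > 0" using theta1_gt theta2_gt by (simp add: rho_def)
  have N_nn: "N k \<ge> 0" for k by (simp add: N_def)
  have Qn: "Q a b \<noteq> -\<infinity>" for a b using Q_proper by (auto simp: proper_fun_def)
  have dec: "L (x (Suc k)) (y (Suc k)) \<le> L (xh k) (yh k) - ereal (rho * N k)" for k
  proof -
    define x1 x0 y1 y0 where "x1 = x (Suc k)" "x0 = xh k" "y1 = y (Suc k)" "y0 = yh k"
    have xs: "Q x1 y0 + ereal (inner (gf x0) x1 + bregman phi1 gphi1 x1 x0)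
       \<le> Q x0 y0 + ereal (inner (gf x0) x0 + bregman phi1 gphi1 x0 x0)"
      using x_step[of k x0] unfolding x1_x0_y1_y0_def .
    have ys: "Q x1 y1 + ereal (inner (gg y0) y1 + bregman phi2 gphi2 y1 y0)
       \<le> Q x1 y0 + ereal (inner (gg y0) y0 + bregman phi2 gphi2 y0 y0)"
      using y_step[of k y0] unfolding x1_x0_y1_y0_def .
    have A: "f x1 + (theta1 - Lf) / 2 * (norm (x1 - x0))\<^sup>2 \<le> f x0 + (inner (gf x0) x1 + bregman phi1 gphi1 x1 x0)
       - (inner (gf x0) x0 + bregman phi1 gphi1 x0 x0)"
      using descent[OF f_deriv gf_lip, of x1 x0] sc_bregman[OF phi1_sc phi1_deriv, of x1 x0]
      by (simp add: bregman_def inner_diff_right left_diff_distrib diff_divide_distrib)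
    have B: "g y1 + (theta2 - Lg) / 2 * (norm (y1 - y0))\<^sup>2 \<le> g y0 + (inner (gg y0) y1 + bregman phi2 gphi2 y1 y0)
       - (inner (gg y0) y0 + bregman phi2 gphi2 y0 y0)"
      using descent[OF g_deriv gg_lip, of y1 y0] sc_bregman[OF phi2_sc phi2_deriv, of y1 y0]
      by (simp add: bregman_def inner_diff_right left_diff_distrib diff_divide_distrib)
    have Nk: "N k = (norm (x1 - x0))\<^sup>2 + (norm (y1 - y0))\<^sup>2"
      unfolding N_def x1_x0_y1_y0_def norm_Pair by simp
    have R: "rho * N k \<le> (theta1 - Lf) / 2 * (norm (x1 - x0))\<^sup>2 + (theta2 - Lg) / 2 * (norm (y1 - y0))\<^sup>2"
    proof -
      have "rho * (norm (x1 - x0))\<^sup>2 \<le> (theta1 - Lf) / 2 * (norm (x1 - x0))\<^sup>2"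
        by (intro mult_right_mono) (auto simp: rho_def min_def)
      moreover have "rho * (norm (y1 - y0))\<^sup>2 \<le> (theta2 - Lg) / 2 * (norm (y1 - y0))\<^sup>2"
        by (intro mult_right_mono) (auto simp: rho_def min_def)
      ultimately show ?thesis unfolding Nk by (simp add: distrib_left)
    qed
    have "ereal (f x1) + Q x1 y1 + ereal (g y1) \<le> ereal (f x0) + Q x0 y0 + ereal (g y0) - ereal (rho * N k)"
      by (rule ereal_comb[OF Qn Qn Qn xs ys A B R])
    thus ?thesis unfolding L_def x1_x0_y1_y0_def .
  qed
  have hat_le: "L (xh k) (yh k) \<le> L (x k) (y k)" for k
  proof (cases k)
    case 0 thus ?thesis using init_hat by simp
  next
    case (Suc j)
    show ?thesis using hat_step[of j] unfolding Suc by (auto split: if_splits)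
  qed
  have c4: "L (x (Suc k)) (y (Suc k)) \<le> L (x k) (y k) - ereal (rho * N k)" for k
    using dec[of k] hat_le[of k] by (meson ereal_minus_mono order.refl order.trans)
  have c5: "L (xh (Suc k)) (yh (Suc k)) \<le> L (xh k) (yh k) - ereal (rho * N k)" for k
    using dec[of k] hat_le[of "Suc k"] by (meson order.trans)
  have rN: "0 \<le> rho * N k" for k using rho_pos N_nn[of k] by simp
  have m1: "decseq (\<lambda>k. L (x k) (y k))"
    by (rule decseq_SucI) (meson c4 ereal_minus_nonneg_le[OF rN] order.trans)
  have m2: "decseq (\<lambda>k. L (xh k) (yh k))"
    by (rule decseq_SucI) (meson c5 ereal_minus_nonneg_le[OF rN] order.trans)
  obtain c :: real where c: "\<And>a b. ereal c \<le> L a b" using L_bdd by blast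
  have fin: "\<bar>L (x k) (y k)\<bar> \<noteq> \<infinity>" for k
  proof -
    have "L (x k) (y k) \<le> L (x 0) (y 0)" using m1 by (simp add: decseq_def)
    thus ?thesis using init_dom c[of "x k" "y k"] by auto
  qed
  have finh: "\<bar>L (xh k) (yh k)\<bar> \<noteq> \<infinity>" for k
    using fin[of k] hat_le[of k] c[of "xh k" "yh k"] by auto
  define lx where "lx k = real_of_ereal (L (x k) (y k))" for k
  define lh where "lh k = real_of_ereal (L (xh k) (yh k))" for k
  have Lx: "L (x k) (y k) = ereal (lx k)" for k using fin[of k] by (simp add: lx_def ereal_real)
  have Lh: "L (xh k) (yh k) = ereal (lh k)" for k using finh[of k] by (simp add: lh_def ereal_real)
  have r4: "lx (Suc k) \<le> lh k - rho * N k" for k using dec[of k] by (simp add: Lx Lh)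
  have r4': "lx (Suc k) \<le> lx k - rho * N k" for k using c4[of k] by (simp add: Lx)
  have r6: "lh k \<le> lx k" for k using hat_le[of k] by (simp add: Lx Lh)
  have lxc: "c \<le> lx k" for k using c[of "x k" "y k"] by (simp add: Lx)
  have dlx: "decseq lx" using m1 by (simp add: decseq_def Lx)
  obtain Ls where Ls: "lx \<longlonglongrightarrow> Ls" using decseq_convergent[OF dlx, of c] lxc by blast
  have lhL: "lh \<longlonglongrightarrow> Ls"
  proof (rule tendsto_sandwich[where f="\<lambda>k. lx (Suc k)" and h=lx])
    show "\<forall>\<^sub>F k in sequentially. lx (Suc k) \<le> lh k" using r4 rN
      by (intro always_eventually allI) (smt (verit))
    show "\<forall>\<^sub>F k in sequentially. lh k \<le> lx k" using r6 by simp
    show "(\<lambda>k. lx (Suc k)) \<longlonglongrightarrow> Ls" using Ls by (rule LIMSEQ_Suc)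
  qed (rule Ls)
  have lim: "\<exists>Lstar::real. (\<lambda>k. L (x k) (y k)) \<longlonglongrightarrow> ereal Lstar
                         \<and> (\<lambda>k. L (xh k) (yh k)) \<longlonglongrightarrow> ereal Lstar"
    using Ls lhL by (intro exI[of _ Ls]) (simp add: Lx Lh)
  have summ: "summable N"
  proof (rule summableI_nonneg_bounded[where x="(lx 0 - c) / rho"])
    fix n
    have "(\<Sum>k<n. rho * N k) \<le> (\<Sum>k<n. lx k - lx (Suc k))"
      by (intro sum_mono) (use r4' in \<open>smt (verit)\<close>)
    also have "\<dots> = lx 0 - lx n" by (rule sum_lessThan_telescope')
    also have "\<dots> \<le> lx 0 - c" using lxc[of n] by simp
    finally have "rho * (\<Sum>k<n. N k) \<le> lx 0 - c" by (simp add: sum_distrib_left)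
    thus "(\<Sum>k<n. N k) \<le> (lx 0 - c) / rho" using rho_pos by (simp add: field_simps)
  qed (rule N_nn)
  have N0: "N \<longlonglongrightarrow> 0" using summable_LIMSEQ_zero[OF summ] .
  have P0: "(\<lambda>k. norm (x (Suc k) - xh k, y (Suc k) - yh k)) \<longlonglongrightarrow> 0"
  proof -
    have "(\<lambda>k. sqrt (N k)) \<longlonglongrightarrow> sqrt 0" by (intro tendsto_real_sqrt N0)
    thus ?thesis by (simp add: N_def)
  qed
  have X0: "(\<lambda>k. norm (x (Suc k) - xh k)) \<longlonglongrightarrow> 0"
    by (rule tendsto_sandwich[OF _ _ tendsto_const P0]) (auto intro!: always_eventually norm_fst_le)
  have Y0: "(\<lambda>k. norm (y (Suc k) - yh k)) \<longlonglongrightarrow> 0"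
    by (rule tendsto_sandwich[OF _ _ tendsto_const P0]) (auto intro!: always_eventually norm_snd_le)
  show ?thesis
    using m1 m2 lim c4 c5 summ X0 Y0 unfolding rho_def N_def by blast
qed

end
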